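(* Let $f\in C^\infty(\mathbb R^d;\mathbb R)$ satisfy the Morse–Bott assumption, let $\Gamma$ be a separating saddle manifold of $f$ and $\sigma=f(\Gamma)$. Then there exist exactly two connected components $B_+$, $B_-$ of $X_\sigma=\{x;\ f(x)<\sigma\}$ such that $\Gamma\cap\overline{B_\pm}\ne\emptyset$. Moreover $\Gamma\subset\overline{B_+}\cap\overline{B_-}$.
   Context: Morse–Bott assumption: the set of critical points of $f$ is a finite disjoint union of boundaryless compact connected submanifolds (critical manifolds) such that at every point the Hessian of $f$ restricted to the normal space is non-degenerate. A saddle manifold is a critical manifold along which $\operatorname{Hess} f$ has exactly one negative eigenvalue. A saddle manifold $\Gamma$ with $\sigma=f(\Gamma)$ is locally separating if, for all $r>0$ small enough, $X_\sigma\cap(\Gamma+B(0,r))$ has exactly two connected components $A_+(r)$ and $A_-(r)$; it is separating if moreover $A_+(r)$ and $A_-(r)$ belong to two disjoint connected components of $X_\sigma$. *)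

theory Defs
  imports "HOL-Analysis.Analysis"
begin

definition smooth_on :: "'a::euclidean_space set \<Rightarrow> ('a \<Rightarrow> 'b::real_normed_vector) \<Rightarrow> bool" where
  "smooth_on U f \<longleftrightarrow>
     (\<exists>D :: nat \<Rightarrow> 'a \<Rightarrow> 'a list \<Rightarrow> 'b.
        (\<forall>x\<in>U. D 0 x [] = f x) \<and>
        (\<forall>n x vs. x \<in> U \<and> length vs = n \<longrightarrow>
            ((\<lambda>y. D n y vs) has_derivative (\<lambda>h. D (Suc n) x (h # vs))) (at x)))"

text \<open>Boundaryless embedded smooth submanifold of the Euclidean space:
 locally straightened by a diffeomorphism onto a linear subspace.\<close>
definition submanifold :: "'a::euclidean_space set \<Rightarrow> bool" where
  "submanifold M \<longleftrightarrow>
     (\<forall>p\<in>M. \<exists>U (\<phi>::'a \<Rightarrow> 'a) L. open U \<and> p \<in> U \<and> smooth_on U \<phi> \<and> inj_on \<phi> U \<and>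
        open (\<phi> ` U) \<and> smooth_on (\<phi> ` U) (inv_into U \<phi>) \<and>
        subspace L \<and> \<phi> ` (M \<inter> U) = \<phi> ` U \<inter> L)"

definition tangent_space :: "'a::euclidean_space set \<Rightarrow> 'a \<Rightarrow> 'a set" where
  "tangent_space M p =
     {v. \<exists>\<gamma>::real \<Rightarrow> 'a. \<gamma> 0 = p \<and> (\<forall>t\<in>{-1<..<1}. \<gamma> t \<in> M) \<and>
          (\<gamma> has_vector_derivative v) (at 0)}"

definition normal_space :: "'a::euclidean_space set \<Rightarrow> 'a \<Rightarrow> 'a set" where
  "normal_space M p = {w. \<forall>v\<in>tangent_space M p. w \<bullet> v = 0}"

definition crit :: "('a::euclidean_space \<Rightarrow> real) \<Rightarrow> 'a set" where
  "crit f = {x. (f has_derivative (\<lambda>h. 0)) (at x)}"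

definition hess :: "('a::euclidean_space \<Rightarrow> real) \<Rightarrow> 'a \<Rightarrow> 'a \<Rightarrow> 'a \<Rightarrow> real" where
  "hess f x u w = frechet_derivative (\<lambda>y. frechet_derivative f (at y) u) (at x) w"

definition hess_op :: "('a::euclidean_space \<Rightarrow> real) \<Rightarrow> 'a \<Rightarrow> 'a \<Rightarrow> 'a" where
  "hess_op f x u = (\<Sum>b\<in>Basis. hess f x u b *\<^sub>R b)"

definition hess_eigenvalues :: "('a::euclidean_space \<Rightarrow> real) \<Rightarrow> 'a \<Rightarrow> real set" where
  "hess_eigenvalues f x = {c. \<exists>v. v \<noteq> 0 \<and> hess_op f x v = c *\<^sub>R v}"

definition morse_bott :: "('a::euclidean_space \<Rightarrow> real) \<Rightarrow> 'a set set \<Rightarrow> bool" where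
  "morse_bott f \<C> \<longleftrightarrow>
     finite \<C> \<and> disjoint \<C> \<and> \<Union>\<C> = crit f \<and>
     (\<forall>C\<in>\<C>. C \<noteq> {} \<and> compact C \<and> connected C \<and> submanifold C \<and>
        (\<forall>p\<in>C. \<forall>u\<in>normal_space C p.
            (\<forall>w\<in>normal_space C p. hess f p u w = 0) \<longrightarrow> u = 0))"

text \<open>Exactly one negative eigenvalue (counted with multiplicity) at every point.\<close>
definition saddle_manifold :: "('a::euclidean_space \<Rightarrow> real) \<Rightarrow> 'a set set \<Rightarrow> 'a set \<Rightarrow> bool" where
  "saddle_manifold f \<C> \<Gamma> \<longleftrightarrow> \<Gamma> \<in> \<C> \<and>
     (\<forall>p\<in>\<Gamma>. \<exists>c<0. {\<mu>\<in>hess_eigenvalues f p. \<mu> < 0} = {c} \<and>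
          dim {v. hess_op f p v = c *\<^sub>R v} = 1)"

definition sublevel :: "('a \<Rightarrow> real) \<Rightarrow> real \<Rightarrow> 'a set" where
  "sublevel f \<sigma> = {x. f x < \<sigma>}"

definition tube :: "'a::euclidean_space set \<Rightarrow> real \<Rightarrow> 'a set" where
  "tube \<Gamma> r = (\<Union>p\<in>\<Gamma>. ball p r)"

definition locally_separating :: "('a::euclidean_space \<Rightarrow> real) \<Rightarrow> 'a set \<Rightarrow> real \<Rightarrow> bool" where
  "locally_separating f \<Gamma> \<sigma> \<longleftrightarrow>
     (\<exists>r0>0. \<forall>r. 0 < r \<and> r < r0 \<longrightarrow>
        (\<exists>Ap Am. Ap \<noteq> Am \<and> components (sublevel f \<sigma> \<inter> tube \<Gamma> r) = {Ap, Am}))"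

definition separating :: "('a::euclidean_space \<Rightarrow> real) \<Rightarrow> 'a set \<Rightarrow> real \<Rightarrow> bool" where
  "separating f \<Gamma> \<sigma> \<longleftrightarrow>
     (\<exists>r0>0. \<forall>r. 0 < r \<and> r < r0 \<longrightarrow>
        (\<exists>Ap Am. Ap \<noteq> Am \<and> components (sublevel f \<sigma> \<inter> tube \<Gamma> r) = {Ap, Am} \<and>
           (\<exists>Cp\<in>components (sublevel f \<sigma>). \<exists>Cm\<in>components (sublevel f \<sigma>).
              Cp \<inter> Cm = {} \<and> Ap \<subseteq> Cp \<and> Am \<subseteq> Cm)))"

end

theory Submission
  imports Defs
begin

lemma oned_pos:
  fixes g g1 g2 :: "real \<Rightarrow> real"
  assumes d1: "\<And>s. (g has_real_derivative g1 s) (at s)"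
    and d2: "\<And>s. (g1 has_real_derivative g2 s) (at s)"
    and neg: "\<And>s. \<bar>s\<bar> \<le> T \<Longrightarrow> g2 s < 0"
    and g10: "g1 0 \<le> 0" and s: "0 < s" "s \<le> T"
  shows "g s < g 0"
proof -
  have g1neg: "g1 t < 0" if "0 < t" "t \<le> T" for t
  proof -
    obtain z where z: "0 < z" "z < t" "g1 t - g1 0 = (t - 0) * g2 z"
      using MVT2[OF \<open>0 < t\<close>, of g1 g2] d2 by blast
    have "g2 z < 0" using neg z that by auto
    with z that g10 show ?thesis by (smt (verit) mult_pos_neg)
  qed
  obtain z where z: "0 < z" "z < s" "g s - g 0 = (s - 0) * g1 z"
    using MVT2[OF \<open>0 < s\<close>, of g g1] d1 by blast
  have "g1 z < 0" using g1neg z s by auto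
  with z s show ?thesis by (smt (verit) mult_pos_neg)
qed

lemma oned_neg:
  fixes g g1 g2 :: "real \<Rightarrow> real"
  assumes d1: "\<And>s. (g has_real_derivative g1 s) (at s)"
    and d2: "\<And>s. (g1 has_real_derivative g2 s) (at s)"
    and neg: "\<And>s. \<bar>s\<bar> \<le> T \<Longrightarrow> g2 s < 0"
    and g10: "g1 0 \<ge> 0" and s: "s < 0" "-T \<le> s"
  shows "g s < g 0"
proof -
  have g1pos: "g1 t > 0" if "t < 0" "-T \<le> t" for t
  proof -
    obtain z where z: "t < z" "z < 0" "g1 0 - g1 t = (0 - t) * g2 z"
      using MVT2[OF \<open>t < 0\<close>, of g1 g2] d2 by blast
    have "g2 z < 0" using neg z that by auto
    with z that g10 show ?thesis by (smt (verit) mult_pos_neg)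
  qed
  obtain z where z: "s < z" "z < 0" "g 0 - g s = (0 - s) * g1 z"
    using MVT2[OF \<open>s < 0\<close>, of g g1] d1 by blast
  have "g1 z > 0" using g1pos z s by auto
  with z s show ?thesis by (smt (verit) mult_pos_pos)
qed

lemma line_deriv:
  fixes F :: "'a::euclidean_space \<Rightarrow> real"
  assumes "\<And>x. (F has_derivative F' x) (at x)"
  shows "((\<lambda>s. F (y + s *\<^sub>R v)) has_real_derivative F' (y + s *\<^sub>R v) v) (at s)"
proof -
  have l: "linear (F' (y + s *\<^sub>R v))"
    using assms has_derivative_linear by blast
  have a: "((\<lambda>s. y + s *\<^sub>R v) has_derivative (\<lambda>t. t *\<^sub>R v)) (at s)"
    by (auto intro!: derivative_eq_intros)
  have "((\<lambda>s. F (y + s *\<^sub>R v)) has_derivative (\<lambda>t. F' (y + s *\<^sub>R v) (t *\<^sub>R v))) (at s)"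
    using has_derivative_compose[OF a assms] by (simp add: o_def)
  moreover have "(\<lambda>t. F' (y + s *\<^sub>R v) (t *\<^sub>R v)) = (*) (F' (y + s *\<^sub>R v) v)"
    using linear_scale[OF l] by (auto simp: mult.commute)
  ultimately show ?thesis
    by (simp add: has_field_derivative_def)
qed

lemma smooth_facts:
  fixes f :: "'a::euclidean_space \<Rightarrow> real"
  assumes "smooth_on UNIV f"
  obtains D1 D2 where "\<And>x. (f has_derivative D1 x) (at x)"
    "\<And>x v. ((\<lambda>y. D1 y v) has_derivative (\<lambda>h. D2 x h v)) (at x)"
    "\<And>x v w. hess f x v w = D2 x w v"
    "\<And>w v. continuous_on UNIV (\<lambda>y. D2 y w v)"
proof -
  obtain D :: "nat \<Rightarrow> 'a \<Rightarrow> 'a list \<Rightarrow> real" where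
    D0: "\<And>x. D 0 x [] = f x" and
    Dd: "\<And>n x vs. length vs = n \<Longrightarrow> ((\<lambda>y. D n y vs) has_derivative (\<lambda>h. D (Suc n) x (h # vs))) (at x)"
    using assms unfolding smooth_on_def by auto
  have fe: "f = (\<lambda>y. D 0 y [])" using D0 by auto
  have a: "(f has_derivative (\<lambda>h. D 1 x [h])) (at x)" for x
    using Dd[of "[]" 0 x] fe by simp
  have b: "((\<lambda>y. D 1 y [v]) has_derivative (\<lambda>h. D 2 x [h, v])) (at x)" for x v
    using Dd[of "[v]" 1 x] by (simp add: numeral_2_eq_2)
  have c: "((\<lambda>y. D 2 y [w, v]) has_derivative (\<lambda>h. D 3 x [h, w, v])) (at x)" for x w v
    using Dd[of "[w, v]" 2 x] by (simp add: numeral_3_eq_3 numeral_2_eq_2)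
  have fd: "frechet_derivative f (at y) = (\<lambda>h. D 1 y [h])" for y
    using frechet_derivative_at[OF a] by simp
  have h: "hess f x v w = D 2 x [w, v]" for x v w
    unfolding hess_def fd using frechet_derivative_at[OF b, of x v] by metis
  have cont: "continuous_on UNIV (\<lambda>y. D 2 y [w, v])" for w v
    using c has_derivative_continuous by (meson continuous_at_imp_continuous_on)
  show ?thesis
    by (rule that[of "\<lambda>x h. D 1 x [h]" "\<lambda>x h v. D 2 x [h, v]"]) (use a b h cont in auto)
qed

lemma neg_dir:
  fixes f :: "'a::euclidean_space \<Rightarrow> real"
  assumes sm: "smooth_on UNIV f" and sad: "saddle_manifold f \<C> \<Gamma>" and p: "p \<in> \<Gamma>"
  shows "\<exists>v. hess f p v v < 0"
proof -
  obtain D1 D2 where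
    b: "\<And>x v. ((\<lambda>y. D1 y v) has_derivative (\<lambda>h. D2 x h v)) (at x)"
    and h: "\<And>x v w. hess f x v w = D2 x w v"
    using smooth_facts[OF sm] by metis
  obtain c where c: "c < 0" "c \<in> hess_eigenvalues f p"
    using sad p unfolding saddle_manifold_def by blast
  then obtain v where v: "v \<noteq> 0" "hess_op f p v = c *\<^sub>R v"
    unfolding hess_eigenvalues_def by blast
  have l: "linear (\<lambda>h. D2 p h v)" using b has_derivative_linear by blast
  have "v \<bullet> hess_op f p v = (\<Sum>b\<in>Basis. D2 p b v * (v \<bullet> b))"
    unfolding hess_op_def h by (simp add: inner_sum_right mult.commute)
  also have "\<dots> = D2 p (\<Sum>b\<in>Basis. (v \<bullet> b) *\<^sub>R b) v"
    by (simp add: linear_sum[OF l] linear_scale[OF l] mult.commute)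
  also have "\<dots> = D2 p v v" by (simp add: euclidean_representation)
  finally have "hess f p v v = c * (v \<bullet> v)" using v h by simp
  moreover have "v \<bullet> v > 0" using v by simp
  ultimately have "hess f p v v < 0" using c by (simp add: mult_neg_pos)
  then show ?thesis by blast
qed

lemma local_claim:
  fixes f :: "'a::euclidean_space \<Rightarrow> real"
  assumes sm: "smooth_on UNIV f" and cr: "\<Gamma> \<subseteq> crit f" and fG: "f ` \<Gamma> = {\<sigma>}"
    and p: "p \<in> \<Gamma>" and hv: "hess f p v v < 0" and r: "0 < r"
  defines "S \<equiv> sublevel f \<sigma> \<inter> tube \<Gamma> r"
  shows "\<exists>\<epsilon>>0. \<exists>a1 a2. a1 \<in> S \<and> a2 \<in> S \<and>
     (\<forall>x \<in> sublevel f \<sigma> \<inter> ball p \<epsilon>. x \<in> connected_component_set S a1 \<or> x \<in> connected_component_set S a2) \<and>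
     (\<forall>q \<in> \<Gamma> \<inter> ball p \<epsilon>. q \<in> closure (connected_component_set S a1) \<and> q \<in> closure (connected_component_set S a2))"
proof -
  obtain D1 D2 where
    a: "\<And>x. (f has_derivative D1 x) (at x)" and
    b: "\<And>x v. ((\<lambda>y. D1 y v) has_derivative (\<lambda>h. D2 x h v)) (at x)"
    and h: "\<And>x v w. hess f x v w = D2 x w v"
    and cont2: "\<And>w v. continuous_on UNIV (\<lambda>y. D2 y w v)"
    using smooth_facts[OF sm] by metis
  have contf: "continuous_on UNIV f"
    using a has_derivative_continuous by (meson continuous_at_imp_continuous_on)
  have openX: "open (sublevel f \<sigma>)"
    unfolding sublevel_def by (rule open_Collect_less[OF contf]) auto
  have tubeI: "z \<in> tube \<Gamma> r" if "q \<in> \<Gamma>" "dist q z < r" for q z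
    using that unfolding tube_def by auto
  have crit0: "D1 q v = 0" if "q \<in> \<Gamma>" for q
  proof -
    have "(f has_derivative (\<lambda>h. 0)) (at q)" using cr that unfolding crit_def by auto
    then have "D1 q = (\<lambda>h. 0)" using has_derivative_unique a by blast
    then show ?thesis by simp
  qed
  have fq: "f q = \<sigma>" if "q \<in> \<Gamma>" for q using fG that by auto
  have "open {y. D2 y v v < 0}"
    by (rule open_Collect_less[OF cont2]) auto
  moreover have "p \<in> {y. D2 y v v < 0}" using hv h by simp
  ultimately obtain \<rho>0 where \<rho>0: "\<rho>0 > 0" "ball p \<rho>0 \<subseteq> {y. D2 y v v < 0}"
    by (meson open_contains_ball)
  define \<rho> where "\<rho> = min \<rho>0 r"
  have \<rho>: "\<rho> > 0" "\<rho> \<le> \<rho>0" "\<rho> \<le> r" using \<rho>0 r unfolding \<rho>_def by auto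
  have "v \<noteq> 0"
  proof
    assume "v = 0"
    have "linear (\<lambda>h. D2 p h v)" using b has_derivative_linear by blast
    then have "D2 p 0 v = 0" using linear_0 by blast
    then show False using hv h \<open>v = 0\<close> by simp
  qed
  then have nv: "norm v > 0" by simp
  define T where "T = \<rho> / (2 * norm v)"
  have T: "T > 0" "T * norm v = \<rho> / 2" using nv \<rho> unfolding T_def by auto
  have key: "D2 (y + s *\<^sub>R v) v v < 0" if "dist p y < \<rho> / 2" "\<bar>s\<bar> \<le> T" for y s
  proof -
    have "dist p (y + s *\<^sub>R v) \<le> dist p y + \<bar>s\<bar> * norm v"
    proof -
      have "dist y (y + s *\<^sub>R v) = \<bar>s\<bar> * norm v" by (simp add: dist_norm)
      then show ?thesis using dist_triangle[of p "y + s *\<^sub>R v" y] by simp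
    qed
    also have "\<dots> < \<rho> / 2 + T * norm v"
      using that nv by (smt (verit) mult_right_mono)
    finally have "dist p (y + s *\<^sub>R v) < \<rho>0" using T \<rho> by simp
    then show ?thesis using \<rho>0 by auto
  qed
  have d1: "\<And>s. ((\<lambda>s. f (y + s *\<^sub>R v)) has_real_derivative D1 (y + s *\<^sub>R v) v) (at s)" for y
    by (rule line_deriv[OF a])
  have d2: "\<And>s. ((\<lambda>s. D1 (y + s *\<^sub>R v) v) has_real_derivative D2 (y + s *\<^sub>R v) v v) (at s)" for y
    by (rule line_deriv[where F="\<lambda>x. D1 x v", OF b])
  have plus: "f (y + s *\<^sub>R v) < f y" if "dist p y < \<rho> / 2" "D1 y v \<le> 0" "0 < s" "s \<le> T" for y s
    using oned_pos[OF d1[of y] d2[of y], where T=T and s=s] key[OF that(1)] that by simp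
  have minus: "f (y + s *\<^sub>R v) < f y" if "dist p y < \<rho> / 2" "D1 y v \<ge> 0" "s < 0" "-T \<le> s" for y s
    using oned_neg[OF d1[of y] d2[of y], where T=T and s=s] key[OF that(1)] that by simp
  have tline: "y + s *\<^sub>R v \<in> tube \<Gamma> r" if "dist p y < \<rho> / 2" "\<bar>s\<bar> \<le> T" for y s
  proof -
    have "dist p (y + s *\<^sub>R v) \<le> dist p y + \<bar>s\<bar> * norm v"
    proof -
      have "dist y (y + s *\<^sub>R v) = \<bar>s\<bar> * norm v" by (simp add: dist_norm)
      then show ?thesis using dist_triangle[of p "y + s *\<^sub>R v" y] by simp
    qed
    also have "\<dots> < \<rho> / 2 + T * norm v"
      using that nv by (smt (verit) mult_right_mono)
    finally have "dist p (y + s *\<^sub>R v) < r" using T \<rho> by simp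
    then show ?thesis using tubeI[OF p] by blast
  qed
  define a1 where "a1 = p + T *\<^sub>R v"
  define a2 where "a2 = p + (-T) *\<^sub>R v"
  have "f a1 < \<sigma>" using plus[of p T] crit0[OF p] fq[OF p] T \<rho> unfolding a1_def by simp
  moreover have "a1 \<in> tube \<Gamma> r" unfolding a1_def using tline[of p T] T \<rho> by simp
  ultimately have a1S: "a1 \<in> S" unfolding S_def sublevel_def by simp
  have "f a2 < \<sigma>" using minus[of p "-T"] crit0[OF p] fq[OF p] T \<rho> unfolding a2_def by simp
  moreover have "a2 \<in> tube \<Gamma> r" unfolding a2_def using tline[of p "-T"] T \<rho> by simp
  ultimately have a2S: "a2 \<in> S" unfolding S_def sublevel_def by simp
  obtain e1 where e1: "e1 > 0" "ball a1 e1 \<subseteq> sublevel f \<sigma>"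
    using openX a1S unfolding S_def by (meson IntD1 open_contains_ball)
  obtain e2 where e2: "e2 > 0" "ball a2 e2 \<subseteq> sublevel f \<sigma>"
    using openX a2S unfolding S_def by (meson IntD1 open_contains_ball)
  define \<epsilon> where "\<epsilon> = min (min e1 e2) (\<rho> / 2)"
  have \<epsilon>: "\<epsilon> > 0" "\<epsilon> \<le> e1" "\<epsilon> \<le> e2" "\<epsilon> \<le> \<rho> / 2" using e1 e2 \<rho> unfolding \<epsilon>_def by auto
  have da: "dist p a1 = \<rho> / 2" "dist p a2 = \<rho> / 2"
    unfolding a1_def a2_def using T by (auto simp: dist_norm)
  have ballS: "ball a \<epsilon> \<subseteq> S" if "a = a1 \<or> a = a2" for a
  proof
    fix z assume z: "z \<in> ball a \<epsilon>"
    have "z \<in> sublevel f \<sigma>" using z that e1 e2 \<epsilon> by auto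
    moreover have "dist p z < r"
    proof -
      have "dist p z \<le> dist p a + dist a z" by (rule dist_triangle)
      also have "\<dots> < \<rho> / 2 + \<rho> / 2" using da z \<epsilon> that by auto
      finally show ?thesis using \<rho> by simp
    qed
    ultimately show "z \<in> S" unfolding S_def using tubeI[OF p] by blast
  qed
  have conn: "y \<in> connected_component_set S a"
    if "a = a1 \<or> a = a2" "\<forall>s \<in> {min 0 u..max 0 u}. y + s *\<^sub>R v \<in> S" "dist a (y + u *\<^sub>R v) < \<epsilon>" for a y u
  proof -
    define P where "P = (\<lambda>s. y + s *\<^sub>R v) ` {min 0 u..max 0 u} \<union> ball a \<epsilon>"
    have c1: "connected ((\<lambda>s. y + s *\<^sub>R v) ` {min 0 u..max 0 u})"
      by (intro connected_continuous_image continuous_intros) auto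
    have "y + u *\<^sub>R v \<in> (\<lambda>s. y + s *\<^sub>R v) ` {min 0 u..max 0 u} \<inter> ball a \<epsilon>"
      using that by auto
    then have "connected P" unfolding P_def
      using c1 connected_Un connected_ball by blast
    moreover have "P \<subseteq> S" unfolding P_def using that ballS by auto
    moreover have "a \<in> P" unfolding P_def using \<epsilon> by auto
    moreover have "y \<in> P" unfolding P_def by (auto intro!: image_eqI[where x=0])
    ultimately show ?thesis using connected_component_maximal by blast
  qed
  have xpart: "x \<in> connected_component_set S a1 \<or> x \<in> connected_component_set S a2"
    if x: "x \<in> sublevel f \<sigma> \<inter> ball p \<epsilon>" for x
  proof -
    have dx: "dist p x < \<rho> / 2" using x \<epsilon> by auto
    have fx: "f x < \<sigma>" using x unfolding sublevel_def by auto
    show ?thesis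
    proof (cases "D1 x v \<le> 0")
      case True
      have "\<forall>s \<in> {min 0 T..max 0 T}. x + s *\<^sub>R v \<in> S"
      proof
        fix s assume s: "s \<in> {min 0 T..max 0 T}"
        have "f (x + s *\<^sub>R v) < \<sigma>"
        proof (cases "s = 0")
          case False
          then show ?thesis using plus[OF dx True, of s] s T fx by auto
        qed (use fx in simp)
        then show "x + s *\<^sub>R v \<in> S" unfolding S_def sublevel_def using tline[OF dx, of s] s T by auto
      qed
      moreover have "dist a1 (x + T *\<^sub>R v) < \<epsilon>" using x unfolding a1_def by (simp add: dist_norm)
      ultimately have "x \<in> connected_component_set S a1" by (rule conn[OF disjI1[OF refl]])
      then show ?thesis ..
    next
      case False
      have "\<forall>s \<in> {min 0 (-T)..max 0 (-T)}. x + s *\<^sub>R v \<in> S"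
      proof
        fix s assume s: "s \<in> {min 0 (-T)..max 0 (-T)}"
        have "f (x + s *\<^sub>R v) < \<sigma>"
        proof (cases "s = 0")
          case False
          then show ?thesis using minus[OF dx, of s] \<open>\<not> D1 x v \<le> 0\<close> s T fx by auto
        qed (use fx in simp)
        then show "x + s *\<^sub>R v \<in> S" unfolding S_def sublevel_def using tline[OF dx, of s] s T by auto
      qed
      moreover have "dist a2 (x + (-T) *\<^sub>R v) < \<epsilon>" using x unfolding a2_def by (simp add: dist_norm)
      ultimately have "x \<in> connected_component_set S a2" by (rule conn[OF disjI2[OF refl]])
      then show ?thesis ..
    qed
  qed
  have qpart: "q \<in> closure (connected_component_set S a1) \<and> q \<in> closure (connected_component_set S a2)"
    if q: "q \<in> \<Gamma> \<inter> ball p \<epsilon>" for q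
  proof -
    have dq: "dist p q < \<rho> / 2" using q \<epsilon> by auto
    have qS1: "q + s *\<^sub>R v \<in> S" if "0 < s" "s \<le> T" for s
      using plus[OF dq, of s] crit0[of q] fq[of q] q that tline[OF dq, of s] T
      unfolding S_def sublevel_def by auto
    have qS2: "q + s *\<^sub>R v \<in> S" if "s < 0" "-T \<le> s" for s
      using minus[OF dq, of s] crit0[of q] fq[of q] q that tline[OF dq, of s] T
      unfolding S_def sublevel_def by auto
    have "q \<in> closure (connected_component_set S a1)"
      unfolding closure_approachable
    proof (intro allI impI)
      fix e :: real assume e: "e > 0"
      define s0 where "s0 = min T (e / (2 * norm v))"
      have s0: "0 < s0" "s0 \<le> T" "s0 * norm v < e"
        using T e nv unfolding s0_def by (auto simp: min_def field_simps)
      have "\<forall>s \<in> {min 0 (T - s0)..max 0 (T - s0)}. (q + s0 *\<^sub>R v) + s *\<^sub>R v \<in> S"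
      proof
        fix s assume s: "s \<in> {min 0 (T - s0)..max 0 (T - s0)}"
        have "q + (s0 + s) *\<^sub>R v \<in> S" using qS1[of "s0 + s"] s s0 by auto
        moreover have "(q + s0 *\<^sub>R v) + s *\<^sub>R v = q + (s0 + s) *\<^sub>R v" by (simp add: algebra_simps)
        ultimately show "(q + s0 *\<^sub>R v) + s *\<^sub>R v \<in> S" by (simp only:)
      qed
      moreover have "dist a1 ((q + s0 *\<^sub>R v) + (T - s0) *\<^sub>R v) < \<epsilon>"
      proof -
        have e1: "(q + s0 *\<^sub>R v) + (T - s0) *\<^sub>R v = q + T *\<^sub>R v" by (simp add: algebra_simps)
        have "dist a1 (q + T *\<^sub>R v) < \<epsilon>" using q unfolding a1_def by (simp add: dist_norm)
        then show ?thesis by (simp only: e1)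
      qed
      ultimately have "q + s0 *\<^sub>R v \<in> connected_component_set S a1"
        by (rule conn[OF disjI1[OF refl]])
      moreover have "dist (q + s0 *\<^sub>R v) q < e" using s0 by (simp add: dist_norm)
      ultimately show "\<exists>y\<in>connected_component_set S a1. dist y q < e" by blast
    qed
    moreover have "q \<in> closure (connected_component_set S a2)"
      unfolding closure_approachable
    proof (intro allI impI)
      fix e :: real assume e: "e > 0"
      define s0 where "s0 = min T (e / (2 * norm v))"
      have s0: "0 < s0" "s0 \<le> T" "s0 * norm v < e"
        using T e nv unfolding s0_def by (auto simp: min_def field_simps)
      have "\<forall>s \<in> {min 0 (s0 - T)..max 0 (s0 - T)}. (q + (-s0) *\<^sub>R v) + s *\<^sub>R v \<in> S"
      proof
        fix s assume s: "s \<in> {min 0 (s0 - T)..max 0 (s0 - T)}"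
        have "q + (s - s0) *\<^sub>R v \<in> S" using qS2[of "s - s0"] s s0 by auto
        moreover have "(q + (-s0) *\<^sub>R v) + s *\<^sub>R v = q + (s - s0) *\<^sub>R v" by (simp add: algebra_simps)
        ultimately show "(q + (-s0) *\<^sub>R v) + s *\<^sub>R v \<in> S" by (simp only:)
      qed
      moreover have "dist a2 ((q + (-s0) *\<^sub>R v) + (s0 - T) *\<^sub>R v) < \<epsilon>"
      proof -
        have e1: "(q + (-s0) *\<^sub>R v) + (s0 - T) *\<^sub>R v = q + (-T) *\<^sub>R v" by (simp add: algebra_simps)
        have "dist a2 (q + (-T) *\<^sub>R v) < \<epsilon>" using q unfolding a2_def by (simp add: dist_norm)
        then show ?thesis by (simp only: e1)
      qed
      ultimately have "q + (-s0) *\<^sub>R v \<in> connected_component_set S a2"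
        by (rule conn[OF disjI2[OF refl]])
      moreover have "dist (q + (-s0) *\<^sub>R v) q < e" using s0 by (simp add: dist_norm)
      ultimately show "\<exists>y\<in>connected_component_set S a2. dist y q < e" by blast
    qed
    ultimately show ?thesis by blast
  qed
  show ?thesis
    apply (rule exI[of _ \<epsilon>])
    apply (rule conjI, rule \<epsilon>(1))
    apply (rule exI[of _ a1], rule exI[of _ a2])
    apply (intro conjI a1S a2S ballI)
      apply (erule xpart)
     apply (erule qpart[THEN conjunct1])
    apply (erule qpart[THEN conjunct2])
    done
qed

theorem lemma1p6:
  fixes f :: "'a::euclidean_space \<Rightarrow> real"
    and \<C> :: "'a set set" and \<Gamma> :: "'a set" and \<sigma> :: real
  assumes "smooth_on UNIV f"
    and "morse_bott f \<C>"
    and "saddle_manifold f \<C> \<Gamma>"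
    and "f ` \<Gamma> = {\<sigma>}"
    and "locally_separating f \<Gamma> \<sigma>"
    and "separating f \<Gamma> \<sigma>"
  shows "\<exists>Bp Bm. Bp \<noteq> Bm \<and>
           {B \<in> components (sublevel f \<sigma>). \<Gamma> \<inter> closure B \<noteq> {}} = {Bp, Bm} \<and>
           \<Gamma> \<subseteq> closure Bp \<inter> closure Bm"
proof -
  note sm = assms(1) and fG = assms(4)
  have G\<C>: "\<Gamma> \<in> \<C>" using assms(3) unfolding saddle_manifold_def by blast
  have cr: "\<Gamma> \<subseteq> crit f" using assms(2) G\<C> unfolding morse_bott_def by blast
  have Gne: "\<Gamma> \<noteq> {}" and Gcpt: "compact \<Gamma>" and Gconn: "connected \<Gamma>"
    using assms(2) G\<C> unfolding morse_bott_def by blast+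
  obtain r0 where r0: "r0 > 0" and sep0: "\<forall>r. 0 < r \<and> r < r0 \<longrightarrow>
        (\<exists>Ap Am. Ap \<noteq> Am \<and> components (sublevel f \<sigma> \<inter> tube \<Gamma> r) = {Ap, Am} \<and>
           (\<exists>Cp\<in>components (sublevel f \<sigma>). \<exists>Cm\<in>components (sublevel f \<sigma>).
              Cp \<inter> Cm = {} \<and> Ap \<subseteq> Cp \<and> Am \<subseteq> Cm))"
    using assms(6)[unfolded separating_def] by (elim exE conjE) (rule that)
  define X where "X = sublevel f \<sigma>"
  have sep: "\<exists>Ap Am. Ap \<noteq> Am \<and> components (X \<inter> tube \<Gamma> r) = {Ap, Am} \<and>
           (\<exists>Cp\<in>components X. \<exists>Cm\<in>components X.
              Cp \<inter> Cm = {} \<and> Ap \<subseteq> Cp \<and> Am \<subseteq> Cm)" if "0 < r" "r < r0" for r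
    using sep0 that unfolding X_def by blast
  define r where "r = r0 / 2"
  have r: "0 < r" "r < r0" using r0 unfolding r_def by auto
  define S where "S = X \<inter> tube \<Gamma> r"
  obtain Ap Am Cp Cm where cS0: "components (X \<inter> tube \<Gamma> r) = {Ap, Am}" and Cp: "Cp \<in> components X"
    and Cm: "Cm \<in> components X" and dis: "Cp \<inter> Cm = {}" and ApC: "Ap \<subseteq> Cp" and AmC: "Am \<subseteq> Cm"
    using sep[OF r] by (elim exE conjE bexE) (rule that, assumption+)
  have cS: "components S = {Ap, Am}" unfolding S_def by (rule cS0)
  have Apne: "Ap \<noteq> {}" by (rule in_components_nonempty[of _ S]) (simp add: cS)
  have Amne: "Am \<noteq> {}" by (rule in_components_nonempty[of _ S]) (simp add: cS)
  have CpCm: "Cp \<noteq> Cm" using dis Apne ApC by blast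
  have SU: "S \<subseteq> Cp \<union> Cm" using Union_components[of S] cS ApC AmC by auto
  have SX: "S \<subseteq> X" unfolding S_def by blast
  have tubeI: "z \<in> tube \<Gamma> r'" if "q \<in> \<Gamma>" "dist q z < r'" for q z r'
    using that unfolding tube_def by auto
  have nonempty: "\<Gamma> \<inter> closure B \<noteq> {}" if BB: "B = Cp \<and> B' = Cm \<or> B = Cm \<and> B' = Cp" for B B'
  proof
    assume emp: "\<Gamma> \<inter> closure B = {}"
    obtain d where d: "d > 0" "\<And>x y. x \<in> \<Gamma> \<Longrightarrow> y \<in> closure B \<Longrightarrow> d \<le> dist x y"
      using separate_compact_closed[OF Gcpt closed_closure emp] by blast
    define r' where "r' = min r d / 2"
    have r': "0 < r'" "r' < r0" "r' \<le> r" "r' < d" using r d(1) unfolding r'_def by auto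
    obtain Ap' Am' Cp' Cm' where cS': "components (X \<inter> tube \<Gamma> r') = {Ap', Am'}" and Cp': "Cp' \<in> components X"
      and Cm': "Cm' \<in> components X" and dis': "Cp' \<inter> Cm' = {}" and ApC': "Ap' \<subseteq> Cp'" and AmC': "Am' \<subseteq> Cm'"
      using sep[OF r'(1,2)] by (elim exE conjE bexE) (rule that, assumption+)
    have B'C: "B' \<in> components X" using BB Cp Cm by blast
    have sub: "A \<subseteq> B'" if A: "A \<in> components (X \<inter> tube \<Gamma> r')" for A
    proof
      fix y assume y: "y \<in> A"
      then have yX: "y \<in> X" and yt: "y \<in> tube \<Gamma> r'" using in_components_subset[OF A] by auto
      then obtain q where q: "q \<in> \<Gamma>" "dist q y < r'" unfolding tube_def by auto
      have "y \<in> tube \<Gamma> r" using tubeI[OF q(1), of y r] q r' by simp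
      then have "y \<in> Cp \<union> Cm" using SU yX unfolding S_def by blast
      moreover have "y \<notin> B"
      proof
        assume "y \<in> B"
        then have "y \<in> closure B" using closure_subset by blast
        then have "d \<le> dist q y" by (rule d(2)[OF q(1)])
        then show False using q r' by simp
      qed
      ultimately show "y \<in> B'" using BB by auto
    qed
    have Apne': "Ap' \<noteq> {}" by (rule in_components_nonempty[of _ "X \<inter> tube \<Gamma> r'"]) (simp add: cS')
    have Amne': "Am' \<noteq> {}" by (rule in_components_nonempty[of _ "X \<inter> tube \<Gamma> r'"]) (simp add: cS')
    have s1: "Ap' \<subseteq> B'" by (rule sub) (simp add: cS')
    have s2: "Am' \<subseteq> B'" by (rule sub) (simp add: cS')
    have "Cp' \<inter> B' \<noteq> {}" using ApC' Apne' s1 by blast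
    then have e1: "Cp' = B'" using components_eq[OF Cp' B'C] by simp
    have "Cm' \<inter> B' \<noteq> {}" using AmC' Amne' s2 by blast
    then have e2: "Cm' = B'" using components_eq[OF Cm' B'C] by simp
    have "Cp' \<inter> Cm' \<noteq> {}" unfolding e1 e2 using s1 Apne' by blast
    then show False using dis' by simp
  qed
  have cover: "\<Gamma> \<subseteq> closure B" if BC: "B = Cp \<or> B = Cm" for B
  proof -
    have BX: "B \<in> components X" using BC Cp Cm by blast
    have "openin (top_of_set \<Gamma>) (\<Gamma> \<inter> closure B)"
      unfolding openin_euclidean_subtopology_iff
    proof (intro conjI ballI)
      fix x assume x: "x \<in> \<Gamma> \<inter> closure B"
      have xG: "x \<in> \<Gamma>" and xB: "x \<in> closure B" using x by auto
      obtain v where v: "hess f x v v < 0" using neg_dir[OF sm assms(3) xG] by (elim exE)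
      note lc = local_claim[OF sm cr fG xG v r(1), folded X_def, folded S_def]
      obtain \<epsilon> a1 a2 where \<epsilon>: "\<epsilon> > 0" and a1S: "a1 \<in> S" and a2S: "a2 \<in> S"
        and xp: "\<forall>y \<in> X \<inter> ball x \<epsilon>. y \<in> connected_component_set S a1 \<or> y \<in> connected_component_set S a2"
        and qp: "\<forall>q \<in> \<Gamma> \<inter> ball x \<epsilon>. q \<in> closure (connected_component_set S a1) \<and> q \<in> closure (connected_component_set S a2)"
        using lc by (elim exE conjE) (rule that, assumption+)
      obtain y where y: "y \<in> B" "dist y x < \<epsilon>" using xB \<epsilon> unfolding closure_approachable by blast
      have yX: "y \<in> X" using y in_components_subset[OF BX] by blast
      have "y \<in> X \<inter> ball x \<epsilon>" using yX y by (simp add: dist_commute)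
      then have yy: "y \<in> connected_component_set S a1 \<or> y \<in> connected_component_set S a2" using xp by (rule bspec[rotated])
      have sub: "connected_component_set S a \<subseteq> B" if "y \<in> connected_component_set S a" for a
      proof (rule components_maximal[OF BX connected_connected_component])
        show "connected_component_set S a \<subseteq> X" using connected_component_subset[of S a] SX by (rule order_trans)
        show "B \<inter> connected_component_set S a \<noteq> {}" using that y(1) by blast
      qed
      have "\<forall>q \<in> \<Gamma> \<inter> ball x \<epsilon>. q \<in> closure B"
      proof
        fix q assume q: "q \<in> \<Gamma> \<inter> ball x \<epsilon>"
        have qq: "q \<in> closure (connected_component_set S a1)" "q \<in> closure (connected_component_set S a2)"
          using bspec[OF qp q] by auto
        from yy show "q \<in> closure B"
        proof
          assume "y \<in> connected_component_set S a1"
          then show ?thesis using closure_mono[OF sub] qq(1) by blast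
        next
          assume "y \<in> connected_component_set S a2"
          then show ?thesis using closure_mono[OF sub] qq(2) by blast
        qed
      qed
      then show "\<exists>e>0. \<forall>x'\<in>\<Gamma>. dist x' x < e \<longrightarrow> x' \<in> \<Gamma> \<inter> closure B"
        using \<epsilon> by (auto simp: dist_commute)
    qed auto
    moreover have "closedin (top_of_set \<Gamma>) (\<Gamma> \<inter> closure B)"
      by (rule closedin_closed_Int) simp
    moreover have "\<Gamma> \<inter> closure B \<noteq> {}" using nonempty[of B] BC by blast
    ultimately have "\<Gamma> \<inter> closure B = \<Gamma>" using Gconn[unfolded connected_clopen, rule_format, of "\<Gamma> \<inter> closure B"] by simp
    then show ?thesis by blast
  qed
  have cp: "\<Gamma> \<subseteq> closure Cp" by (rule cover) simp
  have cm: "\<Gamma> \<subseteq> closure Cm" by (rule cover) simp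
  have "{B \<in> components X. \<Gamma> \<inter> closure B \<noteq> {}} = {Cp, Cm}"
  proof
    show "{B \<in> components X. \<Gamma> \<inter> closure B \<noteq> {}} \<subseteq> {Cp, Cm}"
    proof
      fix B assume "B \<in> {B \<in> components X. \<Gamma> \<inter> closure B \<noteq> {}}"
      then have BX: "B \<in> components X" and "\<Gamma> \<inter> closure B \<noteq> {}" by auto
      then obtain p where p: "p \<in> \<Gamma>" "p \<in> closure B" by blast
      obtain y where y: "y \<in> B" "dist y p < r" using p(2) r unfolding closure_approachable by blast
      have "y \<in> S" unfolding S_def using y in_components_subset[OF BX] tubeI[OF p(1), of y r]
        by (auto simp: dist_commute)
      then have "y \<in> Cp \<or> y \<in> Cm" using SU by blast
      then show "B \<in> {Cp, Cm}" using components_eq[OF BX Cp] components_eq[OF BX Cm] y by blast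
    qed
    show "{Cp, Cm} \<subseteq> {B \<in> components X. \<Gamma> \<inter> closure B \<noteq> {}}"
      using Cp Cm cp cm Gne by auto
  qed
  then have "Cp \<noteq> Cm \<and> {B \<in> components (sublevel f \<sigma>). \<Gamma> \<inter> closure B \<noteq> {}} = {Cp, Cm} \<and>
           \<Gamma> \<subseteq> closure Cp \<inter> closure Cm" unfolding X_def using CpCm cp cm by simp
  then show ?thesis by blast
qed

end
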